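(* Let $K$ be an algebraically closed field and let $d,n$ be integers with $1<d<n$, $\gcd(n,d)=1$ and $\operatorname{char}(K)\nmid d$. Let $m>n$ be an integer and $\ell:=m/d$. Let $a,A\in K$ with $A\neq 0$. (a) Suppose $v(x)\in K[x]$ is such that $h(x)=A(x-a)^m+v(x)^d$ has degree $n$. Then $d\mid m$, $\deg(v)=\ell$, the leading coefficient $B$ of $v$ satisfies $B^d=-A$, and $v(x)=B(x-a)^{\ell}+q(x)$ with $q(x)\in K[x]$ a nonzero polynomial of degree $n-m+\ell$. In particular $n-m+\ell\geq 0$, i.e. $n\geq m(1-1/d)$. (b) Assume $d\mid m$ and $n-m+\ell\geq 0$. Let $q(x)\in K[x]$ be any polynomial of degree $n-m+\ell$, choose $B\in K$ with $A=-B^d$, and put $v(x):=Bx^{\ell}+q(x)$. Then $\deg(v)=\ell\geq 2$ and the polynomial $h(x)=Ax^m+v(x)^d$ has degree $n$. *)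

theory Defs
  imports "HOL-Computational_Algebra.Polynomial"
begin

end

theory Submission
  imports Defs
begin

lemma coeff_mult_bound:
  fixes f g :: "'a::comm_semiring_1 poly"
  assumes "degree f \<le> i" "degree g \<le> j"
  shows "coeff (f * g) (i + j) = coeff f i * coeff g j"
proof -
  have "coeff (f * g) (i + j) = (\<Sum>k\<le>i+j. coeff f k * coeff g (i + j - k))"
    by (simp add: coeff_mult)
  also have "\<dots> = (\<Sum>k\<in>{i}. coeff f k * coeff g (i + j - k))"
  proof (rule sum.mono_neutral_right)
    show "\<forall>k\<in>{..i + j} - {i}. coeff f k * coeff g (i + j - k) = 0"
    proof
      fix k assume k: "k \<in> {..i + j} - {i}"
      show "coeff f k * coeff g (i + j - k) = 0"
      proof (cases "k < i")
        case True
        then have "coeff g (i + j - k) = 0" using assms(2) by (intro coeff_eq_0) auto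
        then show ?thesis by simp
      next
        case False
        then have "coeff f k = 0" using assms(1) k by (intro coeff_eq_0) auto
        then show ?thesis by simp
      qed
    qed
  qed auto
  finally show ?thesis by simp
qed

lemma key:
  fixes p q :: "'a::field poly"
  assumes "degree q < degree p"
  shows "degree ((p+q)^Suc d - p^Suc d) \<le> d*degree p + degree q \<and>
     coeff ((p+q)^Suc d - p^Suc d) (d*degree p + degree q) = of_nat (Suc d) * lead_coeff p ^ d * lead_coeff q"
proof (induction d)
  case 0
  then show ?case by simp
next
  case (Suc d)
  define D where "D = (p+q)^Suc d - p^Suc d"
  have eq: "(p+q)^Suc (Suc d) - p^Suc (Suc d) = (p+q) * D + q * p ^ Suc d"
    unfolding D_def by (simp add: algebra_simps)
  have dpq: "degree (p+q) = degree p" using assms by (simp add: degree_add_eq_left)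
  have lpq: "lead_coeff (p+q) = lead_coeff p" using assms dpq by (simp add: coeff_eq_0)
  have dD: "degree D \<le> d*degree p + degree q" using Suc unfolding D_def by simp
  have cD: "coeff D (d*degree p + degree q) = of_nat (Suc d) * lead_coeff p ^ d * lead_coeff q"
    using Suc unfolding D_def by simp
  have d1: "degree ((p+q) * D) \<le> Suc d * degree p + degree q"
    using degree_mult_le[of "p+q" D] dD dpq by simp
  have dpow: "degree (p ^ Suc d) \<le> Suc d * degree p"
    using degree_power_le[of p "Suc d"] by (simp add: mult.commute)
  have d2: "degree (q * p ^ Suc d) \<le> Suc d * degree p + degree q"
    using degree_mult_le[of q "p ^ Suc d"] dpow by simp
  have c1: "coeff ((p+q) * D) (Suc d * degree p + degree q) = lead_coeff p * (of_nat (Suc d) * lead_coeff p ^ d * lead_coeff q)"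
    using coeff_mult_bound[of "p+q" "degree p" D "d*degree p + degree q"] dpq dD cD lpq
    by (simp add: add.assoc)
  have p0: "p \<noteq> 0" using assms by auto
  have cp: "coeff (p ^ Suc d) (Suc d * degree p) = lead_coeff p ^ Suc d"
    using degree_power_eq[OF p0, of "Suc d"] lead_coeff_power[of p "Suc d"] by simp
  have c2: "coeff (q * p ^ Suc d) (Suc d * degree p + degree q) = lead_coeff q * lead_coeff p ^ Suc d"
    using coeff_mult_bound[of q "degree q" "p ^ Suc d" "Suc d * degree p"] dpow cp
    by (simp add: add.commute)
  show ?case
  proof
    show "degree ((p + q) ^ Suc (Suc d) - p ^ Suc (Suc d)) \<le> Suc d * degree p + degree q"
      unfolding eq using d1 d2 by (intro degree_add_le) auto
    show "coeff ((p + q) ^ Suc (Suc d) - p ^ Suc (Suc d)) (Suc d * degree p + degree q) =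
      of_nat (Suc (Suc d)) * lead_coeff p ^ Suc d * lead_coeff q"
      unfolding eq coeff_add c1 c2 by (simp add: algebra_simps)
  qed
qed

lemma key2:
  fixes p q :: "'a::field poly"
  assumes "degree q < degree p" "q \<noteq> 0" "p \<noteq> 0" "(of_nat (Suc d) :: 'a) \<noteq> 0"
  shows "degree ((p+q)^Suc d - p^Suc d) = d*degree p + degree q"
proof -
  note k = key[OF assms(1), of d]
  have "coeff ((p+q)^Suc d - p^Suc d) (d*degree p + degree q) \<noteq> 0"
    using k assms by simp
  then have "d*degree p + degree q \<le> degree ((p+q)^Suc d - p^Suc d)" by (rule le_degree)
  with k show ?thesis by simp
qed
theorem proposition5p3:
  fixes d n m :: nat and a A :: "'a :: alg_closed_field"
  assumes "1 < d" and "d < n" and "coprime n d" and "\<not> CHAR('a) dvd d"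
    and "n < m" and "A \<noteq> 0"
  shows
    "(\<forall>v :: 'a poly.
        degree (smult A ([:-a, 1:] ^ m) + v ^ d) = n \<longrightarrow>
          d dvd m \<and> degree v = m div d \<and> lead_coeff v ^ d = - A \<and>
          (\<exists>q. q \<noteq> 0 \<and> int (degree q) = int n - int m + int (m div d) \<and>
               v = smult (lead_coeff v) ([:-a, 1:] ^ (m div d)) + q) \<and>
          int n - int m + int (m div d) \<ge> 0 \<and>
          real n \<ge> real m * (1 - 1 / real d)) \<and>
    (d dvd m \<and> int n - int m + int (m div d) \<ge> 0 \<longrightarrow>
       (\<forall>(q :: 'a poly) B. q \<noteq> 0 \<and> int (degree q) = int n - int m + int (m div d) \<and> A = - (B ^ d) \<longrightarrow>
          (let v = monom B (m div d) + q in
             degree v = m div d \<and> m div d \<ge> 2 \<and>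
             degree (monom A m + v ^ d) = n)))"
proof -
  define w :: "'a poly" where "w = [:-a, 1:]"
  have charD: "(of_nat d :: 'a) \<noteq> 0" using assms(4) by (simp add: of_nat_eq_0_iff_char_dvd)
  obtain d' where d': "d = Suc d'" using assms(1) by (cases d) auto
  have partA: "d dvd m \<and> degree v = m div d \<and> lead_coeff v ^ d = - A \<and>
          (\<exists>q. q \<noteq> 0 \<and> int (degree q) = int n - int m + int (m div d) \<and>
               v = smult (lead_coeff v) ([:-a, 1:] ^ (m div d)) + q) \<and>
          int n - int m + int (m div d) \<ge> 0 \<and>
          real n \<ge> real m * (1 - 1 / real d)"
    if hv: "degree (smult A ([:-a, 1:] ^ m) + v ^ d) = n" for v :: "'a poly"
  proof -
    define P where "P = smult A (w ^ m)"
    have dP: "degree P = m" unfolding P_def w_def using assms(6) by (simp add: degree_linear_power)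
    have cw: "\<And>k. coeff ([:-a, 1:] ^ k) k = 1"
      using lead_coeff_power[of "[:-a, 1:]"] by (simp add: degree_linear_power)
    have lP: "lead_coeff P = A" unfolding P_def w_def using assms(6) cw
      by (simp add: degree_linear_power)
    have h: "degree (P + v ^ d) = n" using hv unfolding P_def w_def .
    have dv: "degree (v ^ d) = m"
    proof (rule ccontr)
      assume ne: "degree (v ^ d) \<noteq> m"
      show False
      proof (cases "degree (v ^ d) < m")
        case True
        then have "degree (P + v ^ d) = m" using dP by (simp add: degree_add_eq_left)
        then show False using h assms(5) by simp
      next
        case False
        then have "degree (P + v ^ d) = degree (v ^ d)" using dP ne by (simp add: degree_add_eq_right)
        then show False using h assms(5) False by simp
      qed
    qed
    have v0: "v \<noteq> 0" using dv assms d' by (auto simp: zero_power)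
    define l where "l = degree v"
    have ml: "m = d * l" using dv degree_power_eq[OF v0, of d] unfolding l_def by simp
    have mdl: "m div d = l" using ml assms(1) by simp
    define B where "B = lead_coeff v"
    have "coeff (P + v ^ d) m = 0" using h assms(5) by (intro coeff_eq_0) simp
    then have BA: "B ^ d = - A" using lP dP dv lead_coeff_power[of v d] unfolding B_def
      by (simp add: eq_neg_iff_add_eq_0 add.commute)
    have B0: "B \<noteq> 0" using v0 unfolding B_def by simp
    define p where "p = smult B (w ^ l)"
    define q where "q = v - p"
    have dp: "degree p = l" unfolding p_def w_def using B0 by (simp add: degree_linear_power)
    have lp: "lead_coeff p = B" unfolding p_def w_def using B0 cw
      by (simp add: degree_linear_power)
    have dq: "degree q < l"
    proof -
      have "degree q \<le> l" unfolding q_def using dp l_def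
        using degree_diff_le_max[of v p] by simp
      moreover have "coeff q l = 0" unfolding q_def using lp dp B_def l_def by simp
      moreover have "l > 0" using ml assms by (cases l) auto
      ultimately show ?thesis
      proof -
        assume a1: "degree q \<le> l" and a2: "coeff q l = 0" and a3: "l > 0"
        show ?thesis
        proof (rule ccontr)
          assume "\<not> degree q < l"
          then have "degree q = l" using a1 by simp
          then have "q = 0" using a2 by (metis leading_coeff_0_iff)
          then show False using \<open>degree q = l\<close> a3 by simp
        qed
      qed
    qed
    have vpq: "v = p + q" unfolding q_def by simp
    have pd: "p ^ d = - P" unfolding p_def P_def using BA ml
      by (simp add: smult_power power_mult[symmetric] mult.commute)
    have hq: "P + v ^ d = (p + q) ^ Suc d' - p ^ Suc d'" using pd vpq d' by simp
    have q0: "q \<noteq> 0"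
    proof
      assume "q = 0"
      then have "P + v ^ d = 0" using hq by simp
      then show False using h assms by simp
    qed
    have p0: "p \<noteq> 0" using dp dq by auto
    have "degree (P + v ^ d) = d' * l + degree q"
      using key2[OF _ q0 p0, of d'] dq dp charD d' hq by simp
    then have nq: "n = d' * l + degree q" using h by simp
    have e: "int (degree q) = int n - int m + int (m div d)"
      using nq ml mdl d' by simp
    have r: "real n \<ge> real m * (1 - 1 / real d)"
    proof -
      have "real m * (1 - 1 / real d) = real d' * real l"
        using ml d' by (simp add: field_simps)
      then show ?thesis using nq by simp
    qed
    show ?thesis
      using ml mdl l_def BA e q0 vpq r unfolding B_def p_def w_def by auto
  qed
  have partB: "let v = monom B (m div d) + q in
             degree v = m div d \<and> m div d \<ge> 2 \<and>
             degree (monom A m + v ^ d) = n"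
    if dm: "d dvd m" and ge: "int n - int m + int (m div d) \<ge> 0"
      and q0: "q \<noteq> 0" and dq: "int (degree q) = int n - int m + int (m div d)" and AB: "A = - (B ^ d)"
    for q :: "'a poly" and B
  proof -
    define l where "l = m div d"
    have ml: "m = d * l" using dm unfolding l_def by simp
    have B0: "B \<noteq> 0" using AB assms(6) assms(1) by (auto simp: zero_power)
    have dql: "degree q < l" using dq assms(5) unfolding l_def by simp
    define p where "p = monom B l"
    have dp: "degree p = l" unfolding p_def using B0 by (simp add: degree_monom_eq)
    have p0: "p \<noteq> 0" using B0 unfolding p_def by simp
    have dv: "degree (p + q) = l" using dp dql by (simp add: degree_add_eq_left)
    have l2: "l \<ge> 2"
    proof (rule ccontr)
      assume "\<not> 2 \<le> l"
      then have "l \<le> 1" by simp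
      then have "m \<le> d" using ml by (cases l) auto
      then show False using assms by simp
    qed
    have pd: "p ^ d = - monom A m" unfolding p_def using AB ml
      by (simp add: monom_power mult.commute minus_monom)
    have "monom A m + (p + q) ^ d = (p + q) ^ Suc d' - p ^ Suc d'" using pd d' by simp
    moreover have "degree ((p + q) ^ Suc d' - p ^ Suc d') = d' * l + degree q"
      using key2[OF _ q0 p0, of d'] dp dql charD d' by simp
    moreover have "d' * l + degree q = n" using dq ml d' unfolding l_def by simp
    ultimately show ?thesis using dv l2 unfolding p_def l_def Let_def by simp
  qed
  show ?thesis using partA partB by blast
qed

end
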